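(* Let $\Lambda\in\mathbb{H}^{\mathbb{Z}}$ satisfy $\sum_n(1+|\Lambda_n|^2)^{-1}<\infty$, and assume $\Lambda$ is generic, i.e. $\Lambda_ni\bar\Lambda_n\neq\Lambda_mi\bar\Lambda_m$ for all $n\neq m$. Then $G_\Lambda$ acts freely on $N_\Lambda=\{x\in M_\Lambda: x_ni\bar x_n-\Lambda_ni\bar\Lambda_n\text{ is independent of }n\}$.
   Context: $\mathbb{H}$ denotes the quaternions, and $S^1\subset\mathbb{C}\subset\mathbb{H}$. $M$ is the space of square-summable sequences in $\mathbb{H}^{\mathbb{Z}}$, and $M_\Lambda=\Lambda+M$. $G_\Lambda=\{g\in(S^1)^{\mathbb{Z}}:\sum_n(1+|\Lambda_n|^2)|1-g_n|^2<\infty,\ \prod_ng_n=1\}$; the product converges under this summability condition. $G_\Lambda$ acts on $M_\Lambda$ by $(xg)_n=x_ng_n$. The set $N_\Lambda$ is the zero set of the hyperkähler moment map $\hat\mu_\Lambda$, given by $\langle\hat\mu_\Lambda(x),\xi\rangle=\sum_n(x_ni\bar x_n-\Lambda_ni\bar\Lambda_n)\xi_n$ for $\xi$ in the Lie algebra $\{\xi\in\mathbb{R}^{\mathbb{Z}}:\sum(1+|\Lambda_n|^2)\xi_n^2<\infty,\ \sum\xi_n=0\}$. *)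

theory Defs
  imports "HOL-Analysis.Analysis"
begin

datatype quat = Quat (qre: real) (qi: real) (qj: real) (qk: real)

definition qmul :: "quat \<Rightarrow> quat \<Rightarrow> quat" where
  "qmul x y = Quat
     (qre x * qre y - qi x * qi y - qj x * qj y - qk x * qk y)
     (qre x * qi y + qi x * qre y + qj x * qk y - qk x * qj y)
     (qre x * qj y - qi x * qk y + qj x * qre y + qk x * qi y)
     (qre x * qk y + qi x * qj y - qj x * qi y + qk x * qre y)"

definition qcnj :: "quat \<Rightarrow> quat" where
  "qcnj x = Quat (qre x) (- qi x) (- qj x) (- qk x)"

definition qsub :: "quat \<Rightarrow> quat \<Rightarrow> quat" where
  "qsub x y = Quat (qre x - qre y) (qi x - qi y) (qj x - qj y) (qk x - qk y)"

definition qnorm2 :: "quat \<Rightarrow> real" where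
  "qnorm2 x = (qre x)^2 + (qi x)^2 + (qj x)^2 + (qk x)^2"

definition qI :: quat where "qI = Quat 0 1 0 0"

definition quat_of_complex :: "complex \<Rightarrow> quat" where
  "quat_of_complex z = Quat (Re z) (Im z) 0 0"

definition qmom :: "quat \<Rightarrow> quat" where
  "qmom x = qmul (qmul x qI) (qcnj x)"

definition M_Lambda :: "(int \<Rightarrow> quat) \<Rightarrow> (int \<Rightarrow> quat) set" where
  "M_Lambda \<Lambda> = {x. (\<lambda>n. qnorm2 (qsub (x n) (\<Lambda> n))) summable_on UNIV}"

text \<open>The (absolutely convergent) product over Z, taken as the limit of symmetric
  partial products, equals 1.\<close>
definition G_Lambda :: "(int \<Rightarrow> quat) \<Rightarrow> (int \<Rightarrow> complex) set" where
  "G_Lambda \<Lambda> = {g. (\<forall>n. cmod (g n) = 1)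
     \<and> (\<lambda>n. (1 + qnorm2 (\<Lambda> n)) * (cmod (1 - g n))^2) summable_on UNIV
     \<and> (\<lambda>N::nat. \<Prod>n\<in>{- int N..int N}. g n) \<longlonglongrightarrow> 1}"

definition act :: "(int \<Rightarrow> quat) \<Rightarrow> (int \<Rightarrow> complex) \<Rightarrow> (int \<Rightarrow> quat)" where
  "act x g = (\<lambda>n. qmul (x n) (quat_of_complex (g n)))"

definition N_Lambda :: "(int \<Rightarrow> quat) \<Rightarrow> (int \<Rightarrow> quat) set" where
  "N_Lambda \<Lambda> = {x \<in> M_Lambda \<Lambda>.
     \<forall>n m. qsub (qmom (x n)) (qmom (\<Lambda> n)) = qsub (qmom (x m)) (qmom (\<Lambda> m))}"

end

theory Submission
  imports Defs
begin


lemma fix_zero2: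
  assumes h: "qmul x (quat_of_complex z) = x" and z: "z \<noteq> 1"
  shows "qmom x = qmom (Quat 0 0 0 0)"
proof -
  obtain r a b c where x: "x = Quat r a b c" by (cases x)
  define p where "p = Re z - 1"
  define q where "q = Im z"
  have pq: "p^2 + q^2 \<noteq> 0"
  proof
    assume "p^2 + q^2 = 0"
    hence "p = 0" "q = 0" by (auto simp: sum_power2_eq_zero_iff)
    hence "z = 1" unfolding p_def q_def by (simp add: complex_eq_iff)
    with z show False by simp
  qed
  from h have e1: "r*p - a*q = 0" and e2: "r*q + a*p = 0" and e3: "b*p + c*q = 0" and e4: "c*p - b*q = 0"
    by (auto simp: qmul_def quat_of_complex_def x p_def q_def algebra_simps)
  have "r*(p^2+q^2) = p*(r*p - a*q) + q*(r*q + a*p)" by (simp add: algebra_simps power2_eq_square)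
  hence "r = 0" using e1 e2 pq by (metis diff_zero mult_zero_right add_0 mult_eq_0_iff)
  have "a*(p^2+q^2) = p*(r*q + a*p) - q*(r*p - a*q)" by (simp add: algebra_simps power2_eq_square)
  hence "a = 0" using e1 e2 pq by (metis diff_zero mult_zero_right add_0 mult_eq_0_iff)
  have "b*(p^2+q^2) = p*(b*p + c*q) - q*(c*p - b*q)" by (simp add: algebra_simps power2_eq_square)
  hence "b = 0" using e3 e4 pq by (metis diff_zero mult_zero_right add_0 mult_eq_0_iff)
  have "c*(p^2+q^2) = q*(b*p + c*q) + p*(c*p - b*q)" by (simp add: algebra_simps power2_eq_square)
  hence "c = 0" using e3 e4 pq by (metis diff_zero mult_zero_right add_0 mult_eq_0_iff)
  show ?thesis using \<open>r=0\<close> \<open>a=0\<close> \<open>b=0\<close> \<open>c=0\<close> x by simp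
qed

theorem proposition2p4:
  fixes \<Lambda> :: "int \<Rightarrow> quat"
  assumes "(\<lambda>n. 1 / (1 + qnorm2 (\<Lambda> n))) summable_on UNIV"
    and "\<forall>n m. n \<noteq> m \<longrightarrow> qmom (\<Lambda> n) \<noteq> qmom (\<Lambda> m)"
  shows "\<forall>x \<in> N_Lambda \<Lambda>. \<forall>g \<in> G_Lambda \<Lambda>. act x g = x \<longrightarrow> g = (\<lambda>n. 1)"
proof (intro ballI impI)
  fix x g assume xN: "x \<in> N_Lambda \<Lambda>" and gG: "g \<in> G_Lambda \<Lambda>" and fx: "act x g = x"
  have fixn: "qmul (x n) (quat_of_complex (g n)) = x n" for n
    using fun_cong[OF fx[unfolded act_def], of n] by simp
  have const: "qsub (qmom (x n)) (qmom (\<Lambda> n)) = qsub (qmom (x m)) (qmom (\<Lambda> m))" for n m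
    using xN unfolding N_Lambda_def by blast
  have uniq: "n = m" if "g n \<noteq> 1" "g m \<noteq> 1" for n m
  proof (rule ccontr)
    assume nm: "n \<noteq> m"
    have "qmom (x n) = qmom (Quat 0 0 0 0)" "qmom (x m) = qmom (Quat 0 0 0 0)"
      using fix_zero2[OF fixn that(1)] fix_zero2[OF fixn that(2)] by auto
    with const[of n m] have "qmom (\<Lambda> n) = qmom (\<Lambda> m)"
      by (cases "qmom (\<Lambda> n)"; cases "qmom (\<Lambda> m)") (auto simp: qsub_def)
    with assms(2) nm show False by blast
  qed
  show "g = (\<lambda>n. 1)"
  proof (rule ccontr)
    assume "g \<noteq> (\<lambda>n. 1)"
    then obtain n0 where n0: "g n0 \<noteq> 1" by auto
    have others: "g n = 1" if "n \<noteq> n0" for n using uniq[OF _ n0] that by blast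
    have lim: "(\<lambda>N::nat. \<Prod>n\<in>{- int N..int N}. g n) \<longlonglongrightarrow> 1"
      using gG unfolding G_Lambda_def by blast
    have ev: "eventually (\<lambda>N::nat. (\<Prod>n\<in>{- int N..int N}. g n) = g n0) sequentially"
    proof (rule eventually_sequentiallyI[of "nat \<bar>n0\<bar>"])
      fix N :: nat assume "nat \<bar>n0\<bar> \<le> N"
      hence mem: "n0 \<in> {- int N..int N}" by auto
      have "(\<Prod>n\<in>{- int N..int N}. g n) = g n0 * (\<Prod>n\<in>{- int N..int N} - {n0}. g n)"
        using mem by (simp add: prod.remove)
      also have "(\<Prod>n\<in>{- int N..int N} - {n0}. g n) = 1"
        by (rule prod.neutral) (auto intro: others)
      finally show "(\<Prod>n\<in>{- int N..int N}. g n) = g n0" by simp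
    qed
    have "(\<lambda>N::nat. \<Prod>n\<in>{- int N..int N}. g n) \<longlonglongrightarrow> g n0"
      using tendsto_eventually[OF ev] by (rule Lim_transform_eventually) (use ev in \<open>auto elim: eventually_mono\<close>)
    with lim have "g n0 = 1" using LIMSEQ_unique by blast
    with n0 show False by simp
  qed
qed

end
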